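(* Let $w_c, w_r \in \mathbb{N}$ with $w_c \le w_r$, and let $G$ be a finite simple $(w_c,w_r)$-regular bipartite graph with parts $\mathcal{V}_c$ and $\mathcal{V}_r$, where $n = |\mathcal{V}_c|$ and $m = |\mathcal{V}_r|$ (so $m \le n$, i.e. $\mathcal{V}_r$ is the smaller part). If $G$ has girth $8$, then $$ m \;\ge\; \frac{-w_c(w_c-2) + w_c\sqrt{(w_c-2)^2 + 4(w_c-1)n}}{2}. $$
   Context: A $(w_c,w_r)$-regular bipartite graph is a bipartite graph with parts $\mathcal{V}_c$ ("variable nodes") and $\mathcal{V}_r$ ("check nodes") such that every vertex of $\mathcal{V}_c$ has degree $w_c$ and every vertex of $\mathcal{V}_r$ has degree $w_r$; in particular $w_c n = w_r m$. The girth of a graph is the length of its shortest cycle. *)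

theory Defs
  imports Complex_Main
begin

definition bipartite_graph :: "'a set \<Rightarrow> 'a set \<Rightarrow> ('a \<times> 'a) set \<Rightarrow> bool" where
  "bipartite_graph Vc Vr E \<longleftrightarrow> finite Vc \<and> finite Vr \<and> Vc \<inter> Vr = {} \<and> E \<subseteq> Vc \<times> Vr"

definition biregular :: "'a set \<Rightarrow> 'a set \<Rightarrow> ('a \<times> 'a) set \<Rightarrow> nat \<Rightarrow> nat \<Rightarrow> bool" where
  "biregular Vc Vr E wc wr \<longleftrightarrow>
     (\<forall>v\<in>Vc. card {c\<in>Vr. (v, c) \<in> E} = wc) \<and>
     (\<forall>c\<in>Vr. card {v\<in>Vc. (v, c) \<in> E} = wr)"

definition adj :: "('a \<times> 'a) set \<Rightarrow> 'a \<Rightarrow> 'a \<Rightarrow> bool" where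
  "adj E x y \<longleftrightarrow> (x, y) \<in> E \<or> (y, x) \<in> E"

definition is_cycle :: "('a \<times> 'a) set \<Rightarrow> 'a list \<Rightarrow> bool" where
  "is_cycle E xs \<longleftrightarrow> length xs \<ge> 3 \<and> distinct xs \<and>
     (\<forall>i < length xs. adj E (xs ! i) (xs ! ((i + 1) mod length xs)))"

definition has_girth :: "('a \<times> 'a) set \<Rightarrow> nat \<Rightarrow> bool" where
  "has_girth E g \<longleftrightarrow> (\<exists>xs. is_cycle E xs \<and> length xs = g) \<and>
     (\<forall>xs. is_cycle E xs \<longrightarrow> g \<le> length xs)"

end

theory Submission
  imports Defs
begin

lemma cyc4:
  assumes "distinct [a,b,c,d]" "adj E a b" "adj E b c" "adj E c d" "adj E d a"
  shows "is_cycle E [a,b,c,d]"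
  unfolding is_cycle_def
proof (intro conjI allI impI)
  fix i assume "i < length [a,b,c,d]"
  then have "i = 0 \<or> i = 1 \<or> i = 2 \<or> i = 3" by auto
  then show "adj E ([a,b,c,d] ! i) ([a,b,c,d] ! ((i + 1) mod length [a,b,c,d]))"
    using assms by auto
qed (use assms in auto)

lemma cyc6:
  assumes "distinct [a,b,c,d,e,f]" "adj E a b" "adj E b c" "adj E c d" "adj E d e"
    "adj E e f" "adj E f a"
  shows "is_cycle E [a,b,c,d,e,f]"
  unfolding is_cycle_def
proof (intro conjI allI impI)
  fix i assume "i < length [a,b,c,d,e,f]"
  then have "i = 0 \<or> i = 1 \<or> i = 2 \<or> i = 3 \<or> i = 4 \<or> i = 5" by auto
  then show "adj E ([a,b,c,d,e,f] ! i) ([a,b,c,d,e,f] ! ((i + 1) mod length [a,b,c,d,e,f]))"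
    using assms by auto
qed (use assms in auto)

lemma final_ineq:
  fixes w r m n :: nat
  assumes "w \<ge> 1" "m * r = n * w" "m \<ge> w * (1 + (r - 1) * (w - 1))" "r \<ge> 1"
  shows "real m \<ge> (- real w * (real w - 2)
      + real w * sqrt ((real w - 2)^2 + 4 * (real w - 1) * real n)) / 2"
proof -
  define D where "D = (real w - 2)^2 + 4 * (real w - 1) * real n"
  have "w \<le> w * (1 + (r - 1) * (w - 1))" by simp
  then have "w \<le> m" using assms(3) by linarith
  then have mpos: "real m \<ge> real w" by simp
  have "real w * (real w - 2) = real w ^2 - 2*real w" by (simp add: algebra_simps power2_eq_square)
  moreover have "real w ^ 2 \<ge> 0" by simp
  ultimately have B0: "0 \<le> 2 * real m + real w * (real w - 2)"
    using mpos by linarith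
  have "real (w * (1 + (r - 1) * (w - 1))) = real w * (1 + (real r - 1) * (real w - 1))"
  proof -
    have "real (r - 1) = real r - 1" "real (w - 1) = real w - 1" using assms(1) assms(4) by auto
    then show ?thesis by (simp only: of_nat_mult of_nat_add of_nat_1)
  qed
  then have m3: "real m \<ge> real w * (1 + (real r - 1) * (real w - 1))"
    using assms(3) by (metis of_nat_le_iff)
  have eq: "real m * real r = real n * real w" using assms(2) by (metis of_nat_mult)
  have key: "real w ^ 2 * D \<le> (2 * real m + real w * (real w - 2))^2"
  proof -
    have "real w ^ 2 * D = real w^2 * (real w - 2)^2 + 4 * real w * (real w - 1) * (real n * real w)"
      unfolding D_def by (simp add: algebra_simps power2_eq_square)
    also have "\<dots> = real w^2 * (real w - 2)^2 + 4 * real w * (real w - 1) * (real m * real r)"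
      by (simp only: eq)
    also have "\<dots> = real w^2 * (real w - 2)^2 + 4 * real w * (real w - 1) * real r * real m"
      by (simp add: algebra_simps)
    also have "\<dots> \<le> real w^2 * (real w - 2)^2 + 4 * real m * (real m + real w * (real w - 2))"
    proof -
      have "real w * (real w - 1) * real r \<le> real m + real w * (real w - 2)"
        using m3 by (simp add: algebra_simps)
      then have "real w * (real w - 1) * real r * real m \<le> (real m + real w * (real w - 2)) * real m"
        by (rule mult_right_mono) simp
      then show ?thesis by (simp add: algebra_simps)
    qed
    also have "\<dots> = (2 * real m + real w * (real w - 2))^2"
      by (simp add: algebra_simps power2_eq_square)
    finally show ?thesis .
  qed
  have "real w * sqrt D = sqrt (real w ^ 2 * D)"
    by (simp add: real_sqrt_mult)
  also have "\<dots> \<le> sqrt ((2 * real m + real w * (real w - 2))^2)"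
    using key by (rule real_sqrt_le_mono)
  also have "\<dots> = 2 * real m + real w * (real w - 2)" using B0 by simp
  finally show ?thesis unfolding D_def by simp
qed

theorem theorem1:
  fixes Vc Vr :: "'a set" and E :: "('a \<times> 'a) set" and wc wr :: nat
  assumes "wc \<le> wr"
    and "bipartite_graph Vc Vr E"
    and "biregular Vc Vr E wc wr"
    and "has_girth E 8"
  shows "real (card Vr) \<ge>
    (- real wc * (real wc - 2)
      + real wc * sqrt ((real wc - 2)^2 + 4 * (real wc - 1) * real (card Vc))) / 2"
proof -
  have fVc: "finite Vc" and fVr: "finite Vr" and disj: "Vc \<inter> Vr = {}" and EV: "E \<subseteq> Vc \<times> Vr"
    using assms(2) unfolding bipartite_graph_def by auto
  define N where "N v = {c\<in>Vr. (v, c) \<in> E}" for v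
  define M where "M c = {v\<in>Vc. (v, c) \<in> E}" for c
  have cN: "\<And>v. v \<in> Vc \<Longrightarrow> card (N v) = wc" and cM: "\<And>c. c \<in> Vr \<Longrightarrow> card (M c) = wr"
    using assms(3) unfolding biregular_def N_def M_def by auto
  have fN: "finite (N v)" for v using fVr unfolding N_def by auto
  have fM: "finite (M c)" for c using fVc unfolding M_def by auto
  have girth: "\<And>xs. is_cycle E xs \<Longrightarrow> 8 \<le> length xs"
    using assms(4) unfolding has_girth_def by auto
  obtain xs where "is_cycle E xs" using assms(4) unfolding has_girth_def by auto
  then have "adj E (xs ! 0) (xs ! 1)" unfolding is_cycle_def
  proof -
    have "length xs \<ge> 3" and "\<forall>i<length xs. adj E (xs ! i) (xs ! ((i + 1) mod length xs))"
      using \<open>is_cycle E xs\<close> unfolding is_cycle_def by auto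
    moreover have "(0 + 1) mod length xs = 1" using \<open>length xs \<ge> 3\<close> by simp
    moreover have "0 < length xs" using \<open>length xs \<ge> 3\<close> by linarith
    ultimately have "adj E (xs ! 0) (xs ! ((0 + 1) mod length xs))" by blast
    then show ?thesis using \<open>(0 + 1) mod length xs = 1\<close> by simp
  qed
  then obtain v c0 where e0: "(v, c0) \<in> E" unfolding adj_def by auto
  have v: "v \<in> Vc" and c0: "c0 \<in> Vr" using e0 EV by auto
  have wc1: "wc \<ge> 1"
  proof -
    have "c0 \<in> N v" using c0 e0 unfolding N_def by auto
    then have "card (N v) \<ge> 1" using fN by (metis One_nat_def Suc_leI card_gt_0_iff empty_iff)
    then show ?thesis using cN v by auto
  qed
  have wr1: "wr \<ge> 1"
  proof -
    have "v \<in> M c0" using v e0 unfolding M_def by auto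
    then have "card (M c0) \<ge> 1" using fM by (metis One_nat_def Suc_leI card_gt_0_iff empty_iff)
    then show ?thesis using cM c0 by auto
  qed
  have E1: "E = Sigma Vc N" using EV unfolding N_def by auto
  have E2: "prod.swap ` E = Sigma Vr M"
  proof
    show "prod.swap ` E \<subseteq> Sigma Vr M" using EV unfolding M_def by auto
    show "Sigma Vr M \<subseteq> prod.swap ` E"
    proof clarify
      fix c u assume "c \<in> Vr" "u \<in> M c"
      then have "(u, c) \<in> E" unfolding M_def by auto
      then show "(c, u) \<in> prod.swap ` E" by (rule rev_image_eqI) simp
    qed
  qed
  have "card E = card Vc * wc"
  proof -
    have "card (Sigma Vc N) = (\<Sum>a\<in>Vc. card (N a))" by (rule card_SigmaI) (use fVc fN in auto)
    also have "\<dots> = (\<Sum>a\<in>Vc. wc)" by (rule sum.cong) (simp_all add: cN)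
    finally show ?thesis using E1 by simp
  qed
  moreover have "card E = card Vr * wr"
  proof -
    have "card (prod.swap ` E) = card E" by (rule card_image) (auto simp add: inj_on_def)
    moreover have "card (Sigma Vr M) = (\<Sum>a\<in>Vr. card (M a))" by (rule card_SigmaI) (use fVr fM in auto)
    moreover have "\<dots> = (\<Sum>a\<in>Vr. wr)" by (rule sum.cong) (simp_all add: cM)
    ultimately show ?thesis using E2 by simp
  qed
  ultimately have dc: "card Vr * wr = card Vc * wc" by simp
  define T where "T = Sigma (N v) (\<lambda>c1. Sigma (M c1 - {v}) (\<lambda>u. N u - {c1}))"
  have cT: "card T = wc * ((wr - 1) * (wc - 1))"
  proof -
    have inner: "card (Sigma (M c1 - {v}) (\<lambda>u. N u - {c1})) = (wr - 1) * (wc - 1)"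
      if c1: "c1 \<in> N v" for c1
    proof -
      have c1V: "c1 \<in> Vr" "(v, c1) \<in> E" using c1 unfolding N_def by auto
      have "card (N u - {c1}) = wc - 1" if "u \<in> M c1 - {v}" for u
      proof -
        have "u \<in> Vc" "c1 \<in> N u" using that c1V unfolding M_def N_def by auto
        then show ?thesis using cN fN by simp
      qed
      then have "card (Sigma (M c1 - {v}) (\<lambda>u. N u - {c1})) = card (M c1 - {v}) * (wc - 1)"
        using card_SigmaI[of "M c1 - {v}" "\<lambda>u. N u - {c1}"] fM fN by (simp add: sum.cong)
      moreover have "card (M c1 - {v}) = wr - 1"
        using cM[OF c1V(1)] fM v c1V unfolding M_def by simp
      ultimately show ?thesis by simp
    qed
    have "card T = (\<Sum>c1\<in>N v. card (Sigma (M c1 - {v}) (\<lambda>u. N u - {c1})))"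
      unfolding T_def by (rule card_SigmaI) (use fN fM in auto)
    also have "\<dots> = (\<Sum>c1\<in>N v. (wr - 1) * (wc - 1))" by (rule sum.cong) (simp_all add: inner)
    also have "\<dots> = wc * ((wr - 1) * (wc - 1))" using cN v by simp
    finally show ?thesis .
  qed
  have adjI: "adj E x y" if "(x, y) \<in> E" for x y using that unfolding adj_def by auto
  have adjI': "adj E y x" if "(x, y) \<in> E" for x y using that unfolding adj_def by auto
  have ne: "x \<noteq> y" "y \<noteq> x" if "x \<in> Vc" "y \<in> Vr" for x y using that disj by auto
  have inj: "inj_on (\<lambda>(c1, u, c2). c2) T"
  proof (rule inj_onI)
    fix x y assume xT: "x \<in> T" and yT: "y \<in> T" and eqf: "(\<lambda>(c1, u, c2). c2) x = (\<lambda>(c1, u, c2). c2) y"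
    obtain c1 u c2 where x: "x = (c1, u, c2)" by (cases x) auto
    obtain d1 u' c2' where yy: "y = (d1, u', c2')" by (cases y) auto
    have "c2' = c2" using eqf x yy by simp
    have h: "c1 \<in> Vr" "(v,c1) \<in> E" "u \<in> Vc" "(u,c1) \<in> E" "u \<noteq> v" "c2 \<in> Vr" "(u,c2) \<in> E" "c2 \<noteq> c1"
      using xT x unfolding T_def N_def M_def by auto
    have h': "d1 \<in> Vr" "(v,d1) \<in> E" "u' \<in> Vc" "(u',d1) \<in> E" "u' \<noteq> v" "(u',c2) \<in> E" "c2 \<noteq> d1"
      using yT yy \<open>c2' = c2\<close> unfolding T_def N_def M_def by auto
    have "c1 = d1 \<and> u = u'"
    proof (cases "u = u'")
      case True
      show ?thesis
      proof (rule ccontr)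
        assume "\<not> ?thesis"
        then have "c1 \<noteq> d1" using True by auto
        have "is_cycle E [v, c1, u, d1]"
        proof (rule cyc4)
          show "distinct [v, c1, u, d1]"
            using h h' \<open>c1 \<noteq> d1\<close> ne[OF v h(1)] ne[OF v h'(1)] ne[OF h(3) h(1)] ne[OF h(3) h'(1)] by auto
        qed (use h h' True in \<open>simp_all add: adj_def\<close>)
        then show False using girth by fastforce
      qed
    next
      case False
      show ?thesis
      proof (cases "c1 = d1")
        case True
        have "is_cycle E [c1, u, c2, u']"
        proof (rule cyc4)
          show "distinct [c1, u, c2, u']"
            using h h' False ne[OF h(3) h(1)] ne[OF h(3) h(6)] ne[OF h'(3) h(1)] ne[OF h'(3) h(6)] by auto
        qed (use h h' True in \<open>simp_all add: adj_def\<close>)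
        then show ?thesis using girth by fastforce
      next
        case False2: False
        have "is_cycle E [v, c1, u, c2, u', d1]"
        proof (rule cyc6)
          show "distinct [v, c1, u, c2, u', d1]"
            using h h' False False2 ne[OF v h(1)] ne[OF v h(6)] ne[OF v h'(1)]
              ne[OF h(3) h(1)] ne[OF h(3) h(6)] ne[OF h(3) h'(1)]
              ne[OF h'(3) h(1)] ne[OF h'(3) h(6)] ne[OF h'(3) h'(1)] by auto
        qed (use h h' in \<open>simp_all add: adj_def\<close>)
        then show ?thesis using girth by fastforce
      qed
    qed
    then show "x = y" using x yy \<open>c2' = c2\<close> by simp
  qed
  have img: "(\<lambda>(c1, u, c2). c2) ` T \<subseteq> Vr - N v"
  proof
    fix y assume "y \<in> (\<lambda>(c1, u, c2). c2) ` T"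
    then obtain c1 u c2 where a: "(c1, u, c2) \<in> T" and y: "y = c2" by auto
    have h: "c1 \<in> Vr" "(v,c1) \<in> E" "u \<in> Vc" "(u,c1) \<in> E" "u \<noteq> v" "c2 \<in> Vr" "(u,c2) \<in> E" "c2 \<noteq> c1"
      using a unfolding T_def N_def M_def by auto
    have "c2 \<notin> N v"
    proof
      assume "c2 \<in> N v"
      then have "(v, c2) \<in> E" unfolding N_def by auto
      have "is_cycle E [v, c1, u, c2]"
      proof (rule cyc4)
        show "distinct [v, c1, u, c2]"
          using h ne[OF v h(1)] ne[OF v h(6)] ne[OF h(3) h(1)] ne[OF h(3) h(6)] by auto
      qed (use h \<open>(v, c2) \<in> E\<close> in \<open>simp_all add: adj_def\<close>)
      then show False using girth by fastforce
    qed
    then show "y \<in> Vr - N v" using y h by auto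
  qed
  have "card T \<le> card (Vr - N v)"
    using card_inj_on_le[OF inj img] fVr by simp
  moreover have "card (Vr - N v) = card Vr - wc"
    using cN[OF v] fN by (simp add: N_def card_Diff_subset)
  moreover have "wc \<le> card Vr"
    using cN[OF v] fVr card_mono[of Vr "N v"] unfolding N_def by auto
  ultimately have "card Vr \<ge> wc * (1 + (wr - 1) * (wc - 1))"
  proof -
    have "wc * (1 + (wr - 1) * (wc - 1)) = wc + wc * ((wr - 1) * (wc - 1))"
      by (simp only: distrib_left mult_1_right)
    then show ?thesis using cT \<open>card T \<le> card (Vr - N v)\<close> \<open>card (Vr - N v) = card Vr - wc\<close> \<open>wc \<le> card Vr\<close>
      by linarith
  qed
  then show ?thesis using final_ineq[OF wc1 dc _ wr1] by simp
qed

end
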